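(* Let $\Gamma$ be an abelian group and $A$ a $\Gamma$-graded $*$-ring. (a) If $A$ has no infinite set of nonzero, pairwise orthogonal, homogeneous projections, then $A$ is a graded Rickart $*$-ring if and only if $A$ is a graded Baer $*$-ring. (b) If for every homogeneous projection $p$ the corner $pAp$ has no infinite set of nonzero, pairwise orthogonal, homogeneous projections, then $A$ is a graded locally Rickart $*$-ring if and only if $A$ is a graded locally Baer $*$-ring.
   Context: Graded $*$-ring: $A=\bigoplus_\gamma A_\gamma$, $A_\gamma A_\delta\subseteq A_{\gamma+\delta}$, with involution $*$ such that $A_\gamma^*\subseteq A_{-\gamma}$. Projection: $p=p^2=p^*$; projections $p,q$ are orthogonal if $pq=0$. Graded Rickart $*$-ring: the right annihilator of every homogeneous element is generated as a right ideal by a homogeneous projection. Graded Baer $*$-ring: the right annihilator of every set of homogeneous elements is generated as a right ideal by a homogeneous projection. $A$ is a graded locally Rickart (resp. Baer) $*$-ring if $pAp$ is a graded Rickart (resp. Baer) $*$-ring for every homogeneous projection $p$. *)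

theory Defs
  imports Main
begin

text \<open>A ring (possibly without unit) of type 'a, graded by an abelian group 'g via
  the family of additive subgroups G, with involution st.\<close>

definition graded_star_ring :: "('g::ab_group_add \<Rightarrow> 'a::ring set) \<Rightarrow> ('a \<Rightarrow> 'a) \<Rightarrow> bool" where
  "graded_star_ring G st \<longleftrightarrow>
     (\<forall>\<gamma>. 0 \<in> G \<gamma> \<and> (\<forall>x\<in>G \<gamma>. \<forall>y\<in>G \<gamma>. x + y \<in> G \<gamma> \<and> - x \<in> G \<gamma>)) \<and>
     (\<forall>x. \<exists>S f. finite S \<and> (\<forall>\<gamma>\<in>S. f \<gamma> \<in> G \<gamma>) \<and> x = (\<Sum>\<gamma>\<in>S. f \<gamma>)) \<and>
     (\<forall>S f. finite S \<longrightarrow> (\<forall>\<gamma>\<in>S. f \<gamma> \<in> G \<gamma>) \<longrightarrow> (\<Sum>\<gamma>\<in>S. f \<gamma>) = 0 \<longrightarrow> (\<forall>\<gamma>\<in>S. f \<gamma> = 0)) \<and>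
     (\<forall>\<gamma> \<delta>. \<forall>x\<in>G \<gamma>. \<forall>y\<in>G \<delta>. x * y \<in> G (\<gamma> + \<delta>)) \<and>
     (\<forall>x y. st (x + y) = st x + st y) \<and>
     (\<forall>x y. st (x * y) = st y * st x) \<and>
     (\<forall>x. st (st x) = x) \<and>
     (\<forall>\<gamma>. \<forall>x\<in>G \<gamma>. st x \<in> G (- \<gamma>))"

definition homogeneous :: "('g \<Rightarrow> 'a set) \<Rightarrow> 'a \<Rightarrow> bool" where
  "homogeneous G x \<longleftrightarrow> (\<exists>\<gamma>. x \<in> G \<gamma>)"

definition projection :: "('a::ring \<Rightarrow> 'a) \<Rightarrow> 'a \<Rightarrow> bool" where
  "projection st p \<longleftrightarrow> p * p = p \<and> st p = p"

definition rann :: "'a::ring set \<Rightarrow> 'a set \<Rightarrow> 'a set" where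
  "rann R S = {x \<in> R. \<forall>s\<in>S. s * x = 0}"

definition right_ideal_gen :: "'a::ring set \<Rightarrow> 'a \<Rightarrow> 'a set" where
  "right_ideal_gen R q = {q * y | y. y \<in> R}"

definition graded_rickart :: "('g \<Rightarrow> 'a::ring set) \<Rightarrow> ('a \<Rightarrow> 'a) \<Rightarrow> 'a set \<Rightarrow> bool" where
  "graded_rickart G st R \<longleftrightarrow>
     (\<forall>x\<in>R. homogeneous G x \<longrightarrow>
        (\<exists>q\<in>R. homogeneous G q \<and> projection st q \<and> rann R {x} = right_ideal_gen R q))"

definition graded_baer :: "('g \<Rightarrow> 'a::ring set) \<Rightarrow> ('a \<Rightarrow> 'a) \<Rightarrow> 'a set \<Rightarrow> bool" where
  "graded_baer G st R \<longleftrightarrow>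
     (\<forall>S. S \<subseteq> R \<longrightarrow> (\<forall>x\<in>S. homogeneous G x) \<longrightarrow>
        (\<exists>q\<in>R. homogeneous G q \<and> projection st q \<and> rann R S = right_ideal_gen R q))"

definition no_inf_orth_proj :: "('g \<Rightarrow> 'a::ring set) \<Rightarrow> ('a \<Rightarrow> 'a) \<Rightarrow> 'a set \<Rightarrow> bool" where
  "no_inf_orth_proj G st R \<longleftrightarrow>
     \<not> (\<exists>P. infinite P \<and> P \<subseteq> R \<and>
          (\<forall>p\<in>P. p \<noteq> 0 \<and> projection st p \<and> homogeneous G p) \<and>
          (\<forall>p\<in>P. \<forall>q\<in>P. p \<noteq> q \<longrightarrow> p * q = 0))"

definition corner :: "'a::ring \<Rightarrow> 'a set" where
  "corner p = {p * x * p | x. True}"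

definition corner_grading :: "('g \<Rightarrow> 'a::ring set) \<Rightarrow> 'a \<Rightarrow> 'g \<Rightarrow> 'a set" where
  "corner_grading G p \<gamma> = {p * x * p | x. x \<in> G \<gamma>}"

definition graded_locally_rickart :: "('g \<Rightarrow> 'a::ring set) \<Rightarrow> ('a \<Rightarrow> 'a) \<Rightarrow> bool" where
  "graded_locally_rickart G st \<longleftrightarrow>
     (\<forall>p. homogeneous G p \<longrightarrow> projection st p \<longrightarrow>
        graded_rickart (corner_grading G p) st (corner p))"

definition graded_locally_baer :: "('g \<Rightarrow> 'a::ring set) \<Rightarrow> ('a \<Rightarrow> 'a) \<Rightarrow> bool" where
  "graded_locally_baer G st \<longleftrightarrow>
     (\<forall>p. homogeneous G p \<longrightarrow> projection st p \<longrightarrow>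
        graded_baer (corner_grading G p) st (corner p))"

end

theory Submission imports Defs begin

locale absR =
  fixes G :: "'g \<Rightarrow> 'a::ring set" and st :: "'a \<Rightarrow> 'a" and R :: "'a set" and Z :: "'a set"
  assumes st_add: "\<And>x y. st (x + y) = st x + st y"
   and st_mul: "\<And>x y. st (x * y) = st y * st x"
   and st_st: "\<And>x. st (st x) = x"
   and R0: "0 \<in> R" and Rdiff: "\<And>x y. x\<in>R \<Longrightarrow> y\<in>R \<Longrightarrow> x - y \<in> R"
   and Rmul: "\<And>x y. x\<in>R \<Longrightarrow> y\<in>R \<Longrightarrow> x*y \<in> R"
   and Rst: "\<And>x. x\<in>R \<Longrightarrow> st x \<in> R"
   and ZR: "Z \<subseteq> R" and Z0: "0 \<in> Z"
   and Zdiff: "\<And>x y. x\<in>Z \<Longrightarrow> y\<in>Z \<Longrightarrow> x - y \<in> Z"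
   and Zmul: "\<And>x y. x\<in>Z \<Longrightarrow> y\<in>Z \<Longrightarrow> x * y \<in> Z"
   and Zhom: "\<And>x. x\<in>Z \<Longrightarrow> homogeneous G x"
   and projZ: "\<And>q. q\<in>R \<Longrightarrow> homogeneous G q \<Longrightarrow> projection st q \<Longrightarrow> q\<in>Z"
begin

lemma st0: "st 0 = 0" using st_add[of 0 0] by simp

lemma st_diff: "st (x - y) = st x - st y"
proof -
  have "st (x - y) + st y = st x" using st_add[of "x-y" y] by simp
  thus ?thesis by (simp add: eq_diff_eq)
qed

lemma proj_le_sym: "projection st e \<Longrightarrow> projection st f \<Longrightarrow> e = e*f \<Longrightarrow> e = f*e"
  unfolding projection_def by (metis st_mul)

lemma proj_le_sym2: "projection st e \<Longrightarrow> projection st f \<Longrightarrow> e = f*e \<Longrightarrow> e = e*f"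
  unfolding projection_def by (metis st_mul)

lemma wf_r:
  assumes noinf: "no_inf_orth_proj G st R"
  shows "wf {(a,b). a\<in>Z \<and> b\<in>Z \<and> projection st a \<and> projection st b \<and> a = a*b \<and> a \<noteq> b}"
    (is "wf ?r")
proof (rule ccontr)
  assume "\<not> wf ?r"
  then obtain c where c: "\<And>i. (c (Suc i), c i) \<in> ?r" unfolding wf_iff_no_infinite_down_chain by blast
  have cZ: "\<And>i. c i \<in> Z" and cp: "\<And>i. projection st (c i)"
    and stp: "\<And>i. c (Suc i) = c (Suc i) * c i" and neq: "\<And>i. c (Suc i) \<noteq> c i"
    using c by auto
  have cc: "\<And>i. c i * c i = c i" and stc: "\<And>i. st (c i) = c i" using cp unfolding projection_def by auto
  have le1: "c j = c j * c i" if ij: "i \<le> j" for i j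
    using ij
  proof (induction j rule: dec_induct)
    case base then show ?case using cc by simp
  next
    case (step n)
    have "c (Suc n) * c i = (c (Suc n) * c n) * c i" using stp[of n] by simp
    also have "\<dots> = c (Suc n) * (c n * c i)" by (simp add: mult.assoc)
    also have "\<dots> = c (Suc n)" using step.IH stp[of n] by simp
    finally show ?case by simp
  qed
  have le2: "c j = c i * c j" if ij: "i \<le> j" for i j
    using proj_le_sym[OF cp cp le1[OF ij]] .
  define d where "d i = c i - c (Suc i)" for i
  have dexp: "d i * d j = c i * c j - c i * c (Suc j) - c (Suc i) * c j + c (Suc i) * c (Suc j)" for i j
    by (simp add: d_def algebra_simps)
  have dd: "d i * d i = d i" for i
  proof -
    have "c (Suc i) * c i = c (Suc i)" "c i * c (Suc i) = c (Suc i)"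
      using le1[of i "Suc i"] le2[of i "Suc i"] by auto
    thus ?thesis using dexp[of i i] cc by (simp add: d_def)
  qed
  have dst: "st (d i) = d i" for i using stc by (simp add: d_def st_diff)
  have dZ: "d i \<in> Z" for i using Zdiff cZ by (simp add: d_def)
  have dnz: "d i \<noteq> 0" for i using neq[of i] by (simp add: d_def)
  have orth: "d i * d j = 0" if "i \<noteq> j" for i j
  proof (cases "i < j")
    case True
    hence "c i * c j = c j" "c i * c (Suc j) = c (Suc j)" "c (Suc i) * c j = c j"
      "c (Suc i) * c (Suc j) = c (Suc j)" using le2 by (metis Suc_leI less_imp_le le_SucI)+
    thus ?thesis using dexp[of i j] by simp
  next
    case False
    hence "j < i" using that by simp
    hence "c i * c j = c i" "c i * c (Suc j) = c i" "c (Suc i) * c j = c (Suc i)"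
      "c (Suc i) * c (Suc j) = c (Suc i)" using le1 by (metis Suc_leI less_imp_le le_SucI)+
    thus ?thesis using dexp[of i j] by simp
  qed
  have inj: "inj d"
  proof (rule injI)
    fix i j assume "d i = d j"
    show "i = j"
    proof (rule ccontr)
      assume "i \<noteq> j"
      hence "d i * d j = 0" by (rule orth)
      thus False using \<open>d i = d j\<close> dd dnz by metis
    qed
  qed
  have "infinite (range d)" using inj finite_imageD infinite_UNIV_nat by blast
  moreover have "range d \<subseteq> R" using dZ ZR by auto
  moreover have "\<forall>p\<in>range d. p \<noteq> 0 \<and> projection st p \<and> homogeneous G p"
    using dnz dd dst dZ Zhom by (auto simp: projection_def)
  moreover have "\<forall>p\<in>range d. \<forall>q\<in>range d. p \<noteq> q \<longrightarrow> p * q = 0" using orth by (metis imageE)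
  ultimately show False using noinf unfolding no_inf_orth_proj_def by blast
qed

lemma rickart_to_baer:
  assumes rick: "graded_rickart G st R" and noinf: "no_inf_orth_proj G st R"
  shows "graded_baer G st R"
proof -
  have R0h: "homogeneous G 0" using Z0 Zhom by blast
  obtain u where u: "u\<in>R" "homogeneous G u" "projection st u" "rann R {0} = right_ideal_gen R u"
    using rick R0 R0h unfolding graded_rickart_def by blast
  have uZ: "u\<in>Z" using projZ u by blast
  have uu: "u*u = u" and stu: "st u = u" using u(3) unfolding projection_def by auto
  have ul: "u*x = x" if "x\<in>R" for x
  proof -
    have "x \<in> rann R {0}" using that by (simp add: rann_def)
    then obtain y where "x = u*y" unfolding u(4) right_ideal_gen_def by auto
    thus ?thesis using uu by (metis mult.assoc)
  qed
  have ur: "x*u = x" if "x\<in>R" for x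
  proof -
    have "u * st x = st x" using ul Rst that by blast
    hence "st (u * st x) = x" using st_st by simp
    thus ?thesis using st_mul st_st stu by metis
  qed
  have meet: "\<exists>m\<in>Z. projection st m \<and> right_ideal_gen R m = right_ideal_gen R e \<inter> right_ideal_gen R f"
    if eZ: "e\<in>Z" and fZ: "f\<in>Z" and pe: "projection st e" and pf: "projection st f" for e f
  proof -
    have eR: "e\<in>R" and fR: "f\<in>R" using eZ fZ ZR by auto
    have ee: "e*e = e" and ste: "st e = e" using pe unfolding projection_def by auto
    have ff: "f*f = f" and stf: "st f = f" using pf unfolding projection_def by auto
    define w where "w = (u - f) * e"
    have wZ: "w \<in> Z" unfolding w_def using Zmul Zdiff uZ fZ eZ by blast
    have wR: "w\<in>R" using wZ ZR by auto
    obtain g where g: "g\<in>R" "homogeneous G g" "projection st g" "rann R {w} = right_ideal_gen R g"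
      using rick wR Zhom[OF wZ] unfolding graded_rickart_def by blast
    have gZ: "g\<in>Z" using projZ g by blast
    have gg: "g*g = g" and stg: "st g = g" using g(3) unfolding projection_def by auto
    have "e*(u-e) = 0" by (simp add: right_diff_distrib ur eR ee)
    hence "w*(u-e) = 0" by (simp add: w_def mult.assoc)
    hence "u - e \<in> rann R {w}" using Rdiff u(1) eR by (simp add: rann_def)
    then obtain y where y: "u - e = g*y" unfolding g(4) right_ideal_gen_def by auto
    hence "g*(u-e) = u - e" using gg by (metis mult.assoc)
    hence h1: "g - g*e = u - e" using ur[OF g(1)] by (simp add: right_diff_distrib)
    have "st (g - g*e) = g - e*g" using stg ste by (simp add: st_diff st_mul)
    moreover have "st (u - e) = u - e" using stu ste by (simp add: st_diff)
    ultimately have "g - e*g = g - g*e" using h1 by simp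
    hence comm: "e*g = g*e" by simp
    define m where "m = e*g"
    have mZ: "m\<in>Z" unfolding m_def using Zmul eZ gZ by blast
    have "m*m = e*(g*e)*g" by (simp add: m_def mult.assoc)
    also have "\<dots> = (e*e)*(g*g)" by (metis comm mult.assoc)
    finally have mm: "m*m = m" by (simp add: ee gg m_def)
    have stm: "st m = m" by (simp add: m_def st_mul stg ste comm)
    have "right_ideal_gen R m = right_ideal_gen R e \<inter> right_ideal_gen R f"
    proof (rule set_eqI, rule iffI)
      fix z assume "z \<in> right_ideal_gen R m"
      then obtain a where a: "z = m*a" "a\<in>R" unfolding right_ideal_gen_def by auto
      have zR: "z\<in>R" using a Rmul eR g(1) by (simp add: m_def)
      have ze: "z = e*(g*a)" using a by (simp add: m_def mult.assoc)
      have gaR: "g*a\<in>R" using Rmul g(1) a by blast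
      have "z = g*(e*a)" using a by (simp add: m_def comm mult.assoc)
      moreover have "e*a \<in> R" using Rmul eR a by blast
      ultimately have "z \<in> rann R {w}" unfolding g(4) right_ideal_gen_def by blast
      hence "w*z = 0" by (simp add: rann_def)
      moreover have "e*z = z" using ze ee by (metis mult.assoc)
      ultimately have "(u - f)*z = 0" by (simp add: w_def mult.assoc)
      hence "z = f*z" using ul[OF zR] by (simp add: left_diff_distrib)
      thus "z \<in> right_ideal_gen R e \<inter> right_ideal_gen R f"
        using ze gaR zR unfolding right_ideal_gen_def by blast
    next
      fix z assume "z \<in> right_ideal_gen R e \<inter> right_ideal_gen R f"
      then obtain a b where ab: "z = e*a" "a\<in>R" "z = f*b" "b\<in>R" unfolding right_ideal_gen_def by blast
      have zR: "z\<in>R" using ab Rmul eR by blast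
      have ez: "e*z = z" using ab ee by (metis mult.assoc)
      have fz: "f*z = z" using ab ff by (metis mult.assoc)
      have "w*z = (u-f)*z" by (simp add: w_def mult.assoc ez)
      also have "\<dots> = 0" using ul[OF zR] fz by (simp add: left_diff_distrib)
      finally have "z \<in> rann R {w}" using zR by (simp add: rann_def)
      then obtain c where "z = g*c" unfolding g(4) right_ideal_gen_def by auto
      hence "g*z = z" using gg by (metis mult.assoc)
      hence "m*z = z" using ez by (simp add: m_def mult.assoc)
      thus "z \<in> right_ideal_gen R m" using zR unfolding right_ideal_gen_def by (metis (mono_tags, lifting) mem_Collect_eq)
    qed
    thus ?thesis using mZ mm stm by (auto simp: projection_def)
  qed
  have uideal: "right_ideal_gen R u = R"
    unfolding right_ideal_gen_def using ul u(1) Rmul by (auto, metis)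
  have fin: "\<exists>m\<in>Z. projection st m \<and> rann R F = right_ideal_gen R m"
    if "finite F" "F \<subseteq> R" "\<forall>x\<in>F. homogeneous G x" for F
    using that
  proof (induction F rule: finite_induct)
    case empty
    have "rann R {} = R" by (simp add: rann_def)
    then show ?case using uZ u(3) uideal by auto
  next
    case (insert x F)
    then obtain m where m: "m\<in>Z" "projection st m" "rann R F = right_ideal_gen R m" by auto
    obtain q where q: "q\<in>R" "homogeneous G q" "projection st q" "rann R {x} = right_ideal_gen R q"
      using rick insert.prems unfolding graded_rickart_def by auto
    have qZ: "q\<in>Z" using projZ q by blast
    have "rann R (insert x F) = rann R {x} \<inter> rann R F" by (auto simp: rann_def)
    then show ?case using meet[OF qZ m(1) q(3) m(2)] q(4) m(3) by auto
  qed
  show ?thesis unfolding graded_baer_def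
  proof (intro allI impI)
    fix S assume SR: "S \<subseteq> R" and Sh: "\<forall>x\<in>S. homogeneous G x"
    define M where "M = {m. m\<in>Z \<and> projection st m \<and> (\<exists>F. finite F \<and> F \<subseteq> S \<and> rann R F = right_ideal_gen R m)}"
    define r where "r = {(a,b). a\<in>Z \<and> b\<in>Z \<and> projection st a \<and> projection st b \<and> a = a*b \<and> a \<noteq> b}"
    have wfr: "wf r" unfolding r_def using wf_r[OF noinf] .
    obtain m0 where "m0\<in>Z" "projection st m0" "rann R {} = right_ideal_gen R m0" using fin[of "{}"] by auto
    hence "m0 \<in> M" unfolding M_def by blast
    then obtain m where mM: "m\<in>M" and mmin: "\<And>y. (y,m)\<in>r \<Longrightarrow> y\<notin>M" using wfE_min[OF wfr] by metis
    then obtain F where F: "finite F" "F \<subseteq> S" "rann R F = right_ideal_gen R m" and mZ: "m\<in>Z"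
      and pm: "projection st m" unfolding M_def by blast
    have mm: "m*m = m" using pm unfolding projection_def by auto
    have sub: "right_ideal_gen R m \<subseteq> rann R {x}" if xS: "x\<in>S" for x
    proof -
      have "finite (insert x F)" "insert x F \<subseteq> R" "\<forall>y\<in>insert x F. homogeneous G y"
        using F xS SR Sh by auto
      then obtain m' where m': "m'\<in>Z" "projection st m'" "rann R (insert x F) = right_ideal_gen R m'"
        using fin by blast
      have m'M: "m' \<in> M" unfolding M_def using m' F xS by blast
      have "rann R (insert x F) \<subseteq> rann R F" by (auto simp: rann_def)
      hence sub1: "right_ideal_gen R m' \<subseteq> right_ideal_gen R m" using m'(3) F(3) by simp
      have "m'*m' = m'" using m'(2) unfolding projection_def by auto
      moreover have "m'\<in>R" using m'(1) ZR by auto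
      ultimately have "m' \<in> right_ideal_gen R m'" unfolding right_ideal_gen_def by (metis (mono_tags, lifting) mem_Collect_eq)
      with sub1 obtain a where "m' = m*a" unfolding right_ideal_gen_def by auto
      hence "m' = m*m'" using mm by (metis mult.assoc)
      hence "m' = m'*m" using proj_le_sym2[OF m'(2) pm] by blast
      hence "m' = m" using mmin[of m'] m'M m'(1,2) mZ pm unfolding r_def by blast
      thus ?thesis using m'(3) by (auto simp: rann_def)
    qed
    have "rann R S = right_ideal_gen R m"
    proof
      show "rann R S \<subseteq> right_ideal_gen R m" using F(2,3) by (auto simp: rann_def)
      show "right_ideal_gen R m \<subseteq> rann R S" using sub mZ ZR Rmul by (auto simp: rann_def right_ideal_gen_def)
    qed
    thus "\<exists>q\<in>R. homogeneous G q \<and> projection st q \<and> rann R S = right_ideal_gen R q"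
      using mZ ZR Zhom pm by blast
  qed
qed

lemma baer_to_rickart:
  assumes "graded_baer G st R" shows "graded_rickart G st R"
  using assms unfolding graded_baer_def graded_rickart_def by auto

end

lemma gsr_unf:
  assumes "graded_star_ring G st"
  shows "(\<forall>\<gamma>. 0 \<in> G \<gamma> \<and> (\<forall>x\<in>G \<gamma>. \<forall>y\<in>G \<gamma>. x + y \<in> G \<gamma> \<and> - x \<in> G \<gamma>))"
    "(\<forall>S f. finite S \<longrightarrow> (\<forall>\<gamma>\<in>S. f \<gamma> \<in> G \<gamma>) \<longrightarrow> (\<Sum>\<gamma>\<in>S. f \<gamma>) = 0 \<longrightarrow> (\<forall>\<gamma>\<in>S. f \<gamma> = 0))"
    "(\<forall>\<gamma> \<delta>. \<forall>x\<in>G \<gamma>. \<forall>y\<in>G \<delta>. x * y \<in> G (\<gamma> + \<delta>))"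
    "(\<forall>x y. st (x + y) = st x + st y)"
    "(\<forall>x y. st (x * y) = st y * st x)"
    "(\<forall>x. st (st x) = x)"
  using assms unfolding graded_star_ring_def by (meson conjunct1 conjunct2)+

lemma gsr_facts:
  assumes "graded_star_ring G st"
  shows "\<And>\<gamma>. 0 \<in> G \<gamma>" "\<And>\<gamma> x y. x\<in>G \<gamma> \<Longrightarrow> y\<in>G \<gamma> \<Longrightarrow> x + y \<in> G \<gamma>"
    "\<And>\<gamma> x. x\<in>G \<gamma> \<Longrightarrow> - x \<in> G \<gamma>"
    "\<And>S f. finite S \<Longrightarrow> (\<forall>\<gamma>\<in>S. f \<gamma> \<in> G \<gamma>) \<Longrightarrow> (\<Sum>\<gamma>\<in>S. f \<gamma>) = 0 \<Longrightarrow> (\<forall>\<gamma>\<in>S. f \<gamma> = 0)"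
    "\<And>\<gamma> \<delta> x y. x\<in>G \<gamma> \<Longrightarrow> y\<in>G \<delta> \<Longrightarrow> x * y \<in> G (\<gamma> + \<delta>)"
    "\<And>x y. st (x + y) = st x + st y" "\<And>x y. st (x * y) = st y * st x" "\<And>x. st (st x) = x"
  using gsr_unf[OF assms] by metis+
lemma gsr_diff:
  assumes "graded_star_ring G st" "x \<in> G \<gamma>" "y \<in> G \<gamma>" shows "x - y \<in> G \<gamma>"
  using gsr_facts(2)[OF assms(1) assms(2) gsr_facts(3)[OF assms(1) assms(3)]] by (simp only: diff_conv_add_uminus)

lemma gsr_mul0:
  assumes "graded_star_ring G st" "x \<in> G 0" "y \<in> G 0" shows "x * y \<in> G 0"
  using gsr_facts(5)[OF assms(1) assms(2,3)] by simp

lemma hp0: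
  assumes gs: "graded_star_ring G st" and x: "x \<in> G \<gamma>" and p: "projection st x"
  shows "x \<in> G 0"
proof (cases "\<gamma> = 0")
  case True then show ?thesis using x by simp
next
  case False
  have xx: "x*x = x" using p unfolding projection_def by auto
  have x2: "x \<in> G (\<gamma> + \<gamma>)" using gsr_facts(5)[OF gs x x] unfolding xx .
  have ne: "\<gamma> \<noteq> \<gamma> + \<gamma>" using False by (simp only: add_cancel_right_right not_False_eq_True)
  define f where "f = (\<lambda>\<delta>. if \<delta> = \<gamma> then x else - x)"
  have fg: "f \<gamma> = x" by (simp add: f_def)
  have fgg: "f (\<gamma>+\<gamma>) = - x" using ne by (simp add: f_def)
  have H1: "\<forall>\<delta>\<in>{\<gamma>, \<gamma>+\<gamma>}. f \<delta> \<in> G \<delta>" using x gsr_facts(3)[OF gs x2] fg fgg by simp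
  have H2: "(\<Sum>\<delta>\<in>{\<gamma>, \<gamma>+\<gamma>}. f \<delta>) = 0" using ne fg fgg by simp
  have fin: "finite {\<gamma>, \<gamma>+\<gamma>}" by simp
  have "\<forall>\<delta>\<in>{\<gamma>, \<gamma>+\<gamma>}. f \<delta> = 0" using gsr_facts(4)[OF gs fin H1 H2] .
  hence "f \<gamma> = 0" by blast
  hence "x = 0" using fg by simp
  thus ?thesis using gsr_facts(1)[OF gs] by simp
qed

lemma absR_UNIV:
  assumes gs: "graded_star_ring G st" shows "absR G st UNIV (G 0)"
proof (unfold_locales)
  note F = gsr_facts[OF gs]
  show "\<And>x y. st (x + y) = st x + st y" "\<And>x y. st (x * y) = st y * st x" "\<And>x. st (st x) = x"
    using F by auto
  show "0 \<in> G 0" using F(1) .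
  show "\<And>x y. x \<in> G 0 \<Longrightarrow> y \<in> G 0 \<Longrightarrow> x - y \<in> G 0" using gsr_diff[OF gs] .
  show "\<And>x y. x \<in> G 0 \<Longrightarrow> y \<in> G 0 \<Longrightarrow> x * y \<in> G 0" using gsr_mul0[OF gs] .
  show "\<And>x. x \<in> G 0 \<Longrightarrow> homogeneous G x" unfolding homogeneous_def by blast
  show "\<And>q. q \<in> UNIV \<Longrightarrow> homogeneous G q \<Longrightarrow> projection st q \<Longrightarrow> q \<in> G 0"
    unfolding homogeneous_def using hp0[OF gs] by blast
qed auto

lemma absR_corner:
  assumes gs: "graded_star_ring G st" and ph: "homogeneous G p" and pp: "projection st p"
  shows "absR (corner_grading G p) st (corner p) (corner_grading G p 0)"
proof -
  note F = gsr_facts[OF gs]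
  have p0: "p \<in> G 0" using hp0[OF gs _ pp] ph unfolding homogeneous_def by blast
  have pp': "p*p = p" "st p = p" using pp unfolding projection_def by auto
  have cg0: "p*x*p \<in> G \<gamma>" if "x \<in> G \<gamma>" for x \<gamma>
    using F(5)[OF F(5)[OF p0 that] p0] by simp
  show ?thesis
  proof (unfold_locales)
    show "\<And>x y. st (x + y) = st x + st y" "\<And>x y. st (x * y) = st y * st x" "\<And>x. st (st x) = x"
      using F by auto
    show "0 \<in> corner p" unfolding corner_def by (rule CollectI, rule exI[of _ 0], simp)
    show "x - y \<in> corner p" if H: "x \<in> corner p" "y \<in> corner p" for x y
    proof -
      obtain a b where "x = p*a*p" "y = p*b*p" using H unfolding corner_def by blast
      moreover have "p*a*p - p*b*p = p*(a-b)*p" by (simp add: algebra_simps)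
      ultimately show ?thesis unfolding corner_def by blast
    qed
    show "x * y \<in> corner p" if H: "x \<in> corner p" "y \<in> corner p" for x y
    proof -
      obtain a b where "x = p*a*p" "y = p*b*p" using H unfolding corner_def by auto
      hence "x*y = p*(a*p*b)*p" using pp' by (metis mult.assoc)
      thus ?thesis unfolding corner_def by blast
    qed
    show "st x \<in> corner p" if H: "x \<in> corner p" for x
    proof -
      obtain a where "x = p*a*p" using H unfolding corner_def by auto
      hence "st x = p * st a * p" using F(7) pp' by (simp add: mult.assoc)
      thus ?thesis unfolding corner_def by blast
    qed
    show "corner_grading G p 0 \<subseteq> corner p" unfolding corner_def corner_grading_def by auto
    show "0 \<in> corner_grading G p 0" unfolding corner_grading_def using F(1)
      by (metis (mono_tags, lifting) mem_Collect_eq mult_zero_left mult_zero_right)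
    show "x - y \<in> corner_grading G p 0" if H: "x \<in> corner_grading G p 0" "y \<in> corner_grading G p 0" for x y
    proof -
      obtain a b where "x = p*a*p" "y = p*b*p" "a \<in> G 0" "b \<in> G 0" using H unfolding corner_grading_def by auto
      moreover have "p*a*p - p*b*p = p*(a-b)*p" by (simp add: algebra_simps)
      ultimately show ?thesis using gsr_diff[OF gs] unfolding corner_grading_def by auto
    qed
    show "x * y \<in> corner_grading G p 0" if H: "x \<in> corner_grading G p 0" "y \<in> corner_grading G p 0" for x y
    proof -
      obtain a b where ab: "x = p*a*p" "y = p*b*p" "a \<in> G 0" "b \<in> G 0" using H unfolding corner_grading_def by auto
      hence "x*y = p*(a*p*b)*p" using pp' by (metis mult.assoc)
      moreover have "a*p*b \<in> G 0" using gsr_mul0[OF gs gsr_mul0[OF gs ab(3) p0] ab(4)] .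
      ultimately show ?thesis unfolding corner_grading_def by blast
    qed
    show "homogeneous (corner_grading G p) x" if H: "x \<in> corner_grading G p 0" for x
      using H unfolding homogeneous_def by blast
    show "q \<in> corner_grading G p 0" if H: "q \<in> corner p" "homogeneous (corner_grading G p) q" "projection st q" for q
    proof -
      obtain x \<gamma> where x: "q = p*x*p" "x \<in> G \<gamma>" using H(2) unfolding homogeneous_def corner_grading_def by auto
      have "q \<in> G \<gamma>" using cg0[OF x(2)] x(1) by simp
      hence "q \<in> G 0" using hp0[OF gs _ H(3)] by blast
      moreover have "q = p*q*p" using x(1) pp' by (metis mult.assoc)
      ultimately show ?thesis unfolding corner_grading_def by blast
    qed
  qed
qed

theorem mainTheorem6:
  fixes G :: "'g::ab_group_add \<Rightarrow> 'a::ring set" and st :: "'a \<Rightarrow> 'a"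
  assumes "graded_star_ring G st"
  shows "(no_inf_orth_proj G st UNIV \<longrightarrow>
            (graded_rickart G st UNIV \<longleftrightarrow> graded_baer G st UNIV)) \<and>
         ((\<forall>p. homogeneous G p \<longrightarrow> projection st p \<longrightarrow>
              no_inf_orth_proj (corner_grading G p) st (corner p)) \<longrightarrow>
            (graded_locally_rickart G st \<longleftrightarrow> graded_locally_baer G st))"
proof (intro conjI impI)
  assume ni: "no_inf_orth_proj G st UNIV"
  interpret U: absR G st UNIV "G 0" by (rule absR_UNIV[OF assms])
  show "graded_rickart G st UNIV \<longleftrightarrow> graded_baer G st UNIV"
    using U.rickart_to_baer[OF _ ni] U.baer_to_rickart by (rule iffI)
next
  assume h: "\<forall>p. homogeneous G p \<longrightarrow> projection st p \<longrightarrow>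
              no_inf_orth_proj (corner_grading G p) st (corner p)"
  have "graded_rickart (corner_grading G p) st (corner p) \<longleftrightarrow> graded_baer (corner_grading G p) st (corner p)"
    if hp: "homogeneous G p" "projection st p" for p
  proof -
    interpret C: absR "corner_grading G p" st "corner p" "corner_grading G p 0"
      by (rule absR_corner[OF assms hp])
    have ni: "no_inf_orth_proj (corner_grading G p) st (corner p)" using h hp by simp
    show ?thesis using C.rickart_to_baer[OF _ ni] C.baer_to_rickart by (rule iffI)
  qed
  thus "graded_locally_rickart G st \<longleftrightarrow> graded_locally_baer G st"
    unfolding graded_locally_rickart_def graded_locally_baer_def by simp
qed

end
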